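(* For all integers $n \geq k \geq 1$, there is a bi-partition $B$ of the input positions of $\operatorname{SSD}_{3n,4k}$ between Alice and Bob such that the communication complexity of $\operatorname{DISJ}^n_k$ is at most the cost of an optimal protocol for $\operatorname{SSD}_{3n,4k}$ under $B$ (both for deterministic protocols and for randomized protocols with error at most $1/3$).
   Context: $\operatorname{SSD}_{n,k} : \{0,1\}^n \times \{0,1\}^k \to \{0,1\}$ is $1$ iff $y$ is a subsequence of $x$ (there exist indices $i_1 < \dots < i_k$ with $x_{i_j} = y_j$). A bi-partition assigns each of the $n+k$ input positions of $(x,y)$ to Alice or Bob. $\operatorname{DISJ}^n_k$ is set disjointness restricted to sets of size $k$: Alice holds $a \in \{0,1\}^n$ and Bob holds $b \in \{0,1\}^n$, both of Hamming weight exactly $k$, and the output is $1$ iff there is no $i$ with $a_i = b_i = 1$. *)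

theory Defs
  imports "HOL-Probability.Probability_Mass_Function" "HOL-Library.Sublist"
begin

text \<open>A node (Ask True g l r) is a bit sent by Alice, (Ask False g l r) a bit sent by Bob;
  the bit g z selects the subtree (True: left).\<close>

datatype 'i proto = Leaf bool | Ask bool "'i \<Rightarrow> bool" "'i proto" "'i proto"

fun run :: "'i proto \<Rightarrow> 'i \<Rightarrow> bool" where
  "run (Leaf b) z = b"
| "run (Ask w g l r) z = (if g z then run l z else run r z)"

fun depth :: "'i proto \<Rightarrow> nat" where
  "depth (Leaf b) = 0"
| "depth (Ask w g l r) = Suc (max (depth l) (depth r))"

fun valid :: "('i \<Rightarrow> 'va) \<Rightarrow> ('i \<Rightarrow> 'vb) \<Rightarrow> 'i proto \<Rightarrow> bool" where
  "valid va vb (Leaf b) = True"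
| "valid va vb (Ask w g l r) =
     ((if w then (\<forall>z z'. va z = va z' \<longrightarrow> g z = g z')
            else (\<forall>z z'. vb z = vb z' \<longrightarrow> g z = g z'))
      \<and> valid va vb l \<and> valid va vb r)"

definition Dcc :: "('i \<Rightarrow> 'va) \<Rightarrow> ('i \<Rightarrow> 'vb) \<Rightarrow> 'i set \<Rightarrow> ('i \<Rightarrow> bool) \<Rightarrow> nat" where
  "Dcc va vb X f = (LEAST d. \<exists>p. valid va vb p \<and> depth p \<le> d \<and> (\<forall>z\<in>X. run p z = f z))"

text \<open>Randomized (public-coin) protocols: finitely supported distributions over
  deterministic protocols; cost = worst-case depth; error at most eps on every input of X.\<close>
definition Rcc :: "('i \<Rightarrow> 'va) \<Rightarrow> ('i \<Rightarrow> 'vb) \<Rightarrow> 'i set \<Rightarrow> ('i \<Rightarrow> bool) \<Rightarrow> real \<Rightarrow> nat" where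
  "Rcc va vb X f eps = (LEAST d. \<exists>P :: 'i proto pmf. finite (set_pmf P) \<and>
      (\<forall>p\<in>set_pmf P. valid va vb p \<and> depth p \<le> d) \<and>
      (\<forall>z\<in>X. measure_pmf.prob P {p. run p z \<noteq> f z} \<le> eps))"

definition disj_dom :: "nat \<Rightarrow> nat \<Rightarrow> (bool list \<times> bool list) set" where
  "disj_dom n k = {(a, b). length a = n \<and> length b = n \<and>
       count_list a True = k \<and> count_list b True = k}"

definition DISJ :: "bool list \<times> bool list \<Rightarrow> bool" where
  "DISJ ab = (\<not> (\<exists>i < length (fst ab). fst ab ! i \<and> snd ab ! i))"

text \<open>SSD_{N,K}: input is the concatenation z = x @ y (positions 0..N-1 hold x,
  positions N..N+K-1 hold y); value 1 iff y is a subsequence of x.\<close>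
definition ssd_dom :: "nat \<Rightarrow> nat \<Rightarrow> bool list set" where
  "ssd_dom N K = {z. length z = N + K}"

definition SSD :: "nat \<Rightarrow> bool list \<Rightarrow> bool" where
  "SSD N z = subseq (drop N z) (take N z)"

definition view :: "nat set \<Rightarrow> bool list \<Rightarrow> nat \<Rightarrow> bool option" where
  "view S z = (\<lambda>i. if i \<in> S \<and> i < length z then Some (z ! i) else None)"

end

theory Submission
  imports Defs
begin

fun tr :: "('x \<Rightarrow> 'y) \<Rightarrow> 'y proto \<Rightarrow> 'x proto" where
  "tr h (Leaf b) = Leaf b"
| "tr h (Ask w g l r) = Ask w (g \<circ> h) (tr h l) (tr h r)"

lemma run_tr: "run (tr h p) x = run p (h x)"
  by (induction p) auto

lemma depth_tr: "depth (tr h p) = depth p"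
  by (induction p) auto

lemma valid_Ask_iff:
  "valid va vb (Ask w g l r) \<longleftrightarrow>
     ((w \<longrightarrow> (\<forall>z z'. va z = va z' \<longrightarrow> g z = g z')) \<and>
      (\<not> w \<longrightarrow> (\<forall>z z'. vb z = vb z' \<longrightarrow> g z = g z')) \<and> valid va vb l \<and> valid va vb r)"
  by (cases w) (simp only: valid.simps if_True if_False simp_thms)+

lemma valid_tr:
  assumes A: "\<And>x x'. va' x = va' x' \<Longrightarrow> va (h x) = va (h x')"
      and B: "\<And>x x'. vb' x = vb' x' \<Longrightarrow> vb (h x) = vb (h x')"
  shows "valid va vb p \<Longrightarrow> valid va' vb' (tr h p)"
proof (induction p)
  case (Leaf b) then show ?case by (simp only: tr.simps valid.simps)
next
  case (Ask w g l r)
  have pv: "(w \<longrightarrow> (\<forall>z z'. va z = va z' \<longrightarrow> g z = g z'))"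
     "(\<not> w \<longrightarrow> (\<forall>z z'. vb z = vb z' \<longrightarrow> g z = g z'))" "valid va vb l" "valid va vb r"
    using Ask.prems unfolding valid_Ask_iff by blast+
  have l: "valid va' vb' (tr h l)" using Ask.IH(1) pv(3) .
  have r: "valid va' vb' (tr h r)" using Ask.IH(2) pv(4) .
  have 1: "w \<longrightarrow> (\<forall>z z'. va' z = va' z' \<longrightarrow> (g \<circ> h) z = (g \<circ> h) z')"
  proof (intro impI allI)
    fix z z' assume w: w and e: "va' z = va' z'"
    have "va (h z) = va (h z')" using A[OF e] .
    then show "(g \<circ> h) z = (g \<circ> h) z'" using pv(1) w unfolding comp_def by blast
  qed
  have 2: "\<not> w \<longrightarrow> (\<forall>z z'. vb' z = vb' z' \<longrightarrow> (g \<circ> h) z = (g \<circ> h) z')"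
  proof (intro impI allI)
    fix z z' assume w: "\<not> w" and e: "vb' z = vb' z'"
    have "vb (h z) = vb (h z')" using B[OF e] .
    then show "(g \<circ> h) z = (g \<circ> h) z'" using pv(2) w unfolding comp_def by blast
  qed
  show ?case unfolding tr.simps valid_Ask_iff using 1 2 l r by blast
qed

lemma Dcc_red:
  assumes ex: "valid va vb p0" "\<forall>z\<in>Y. run p0 z = g z"
      and A: "\<And>x x'. va' x = va' x' \<Longrightarrow> va (h x) = va (h x')"
      and B: "\<And>x x'. vb' x = vb' x' \<Longrightarrow> vb (h x) = vb (h x')"
      and R: "\<And>x. x \<in> X \<Longrightarrow> h x \<in> Y \<and> f x = g (h x)"
  shows "Dcc va' vb' X f \<le> Dcc va vb Y g"
proof -
  let ?P = "\<lambda>d. \<exists>p. valid va vb p \<and> depth p \<le> d \<and> (\<forall>z\<in>Y. run p z = g z)"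
  have "?P (depth p0)" using ex by blast
  then have "?P (Dcc va vb Y g)" unfolding Dcc_def by (rule LeastI)
  then obtain p where p: "valid va vb p" "depth p \<le> Dcc va vb Y g" "\<forall>z\<in>Y. run p z = g z" by blast
  have v: "valid va' vb' (tr h p)" using valid_tr[of va' va h vb' vb, OF A B p(1)] .
  have d: "depth (tr h p) \<le> Dcc va vb Y g" using p(2) by (simp add: depth_tr)
  have r: "\<forall>z\<in>X. run (tr h p) z = f z" using p(3) R by (simp add: run_tr)
  show ?thesis unfolding Dcc_def[of va' vb' X f] apply (rule Least_le) using v d r by blast
qed

lemma Rcc_red:
  assumes ex: "valid va vb p0" "\<forall>z\<in>Y. run p0 z = g z" and eps: "0 \<le> eps"
      and A: "\<And>x x'. va' x = va' x' \<Longrightarrow> va (h x) = va (h x')"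
      and B: "\<And>x x'. vb' x = vb' x' \<Longrightarrow> vb (h x) = vb (h x')"
      and R: "\<And>x. x \<in> X \<Longrightarrow> h x \<in> Y \<and> f x = g (h x)"
  shows "Rcc va' vb' X f eps \<le> Rcc va vb Y g eps"
proof -
  let ?P = "\<lambda>d. \<exists>P :: _ proto pmf. finite (set_pmf P) \<and>
      (\<forall>p\<in>set_pmf P. valid va vb p \<and> depth p \<le> d) \<and>
      (\<forall>z\<in>Y. measure_pmf.prob P {p. run p z \<noteq> g z} \<le> eps)"
  have e1: "\<forall>z\<in>Y. measure_pmf.prob (return_pmf p0) {p. run p z \<noteq> g z} \<le> eps"
    using ex(2) eps by simp
  have "?P (depth p0)"
    apply (rule exI[of _ "return_pmf p0"])
    using e1 ex(1) by simp
  then have "?P (Rcc va vb Y g eps)" unfolding Rcc_def by (rule LeastI)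
  then obtain P where P: "finite (set_pmf P)" "\<forall>p\<in>set_pmf P. valid va vb p \<and> depth p \<le> Rcc va vb Y g eps"
     "\<forall>z\<in>Y. measure_pmf.prob P {p. run p z \<noteq> g z} \<le> eps" by blast
  let ?Q = "map_pmf (tr h) P"
  have 1: "finite (set_pmf ?Q)" using P(1) by simp
  have 2: "\<forall>p\<in>set_pmf ?Q. valid va' vb' p \<and> depth p \<le> Rcc va vb Y g eps"
  proof
    fix q assume "q \<in> set_pmf ?Q"
    then obtain p where q: "q = tr h p" and p: "p \<in> set_pmf P" by auto
    show "valid va' vb' q \<and> depth q \<le> Rcc va vb Y g eps"
      using P(2) p valid_tr[of va' va h vb' vb, OF A B] unfolding q by (simp add: depth_tr)
  qed
  have 3: "\<forall>z\<in>X. measure_pmf.prob ?Q {p. run p z \<noteq> f z} \<le> eps"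
  proof
    fix z assume z: "z \<in> X"
    have e: "tr h -` {p. run p z \<noteq> f z} = {p. run p (h z) \<noteq> g (h z)}"
      using R[OF z] by (auto simp: run_tr)
    have "measure_pmf.prob ?Q {p. run p z \<noteq> f z} = measure_pmf.prob P {p. run p (h z) \<noteq> g (h z)}"
      by (simp only: measure_map_pmf e)
    then show "measure_pmf.prob ?Q {p. run p z \<noteq> f z} \<le> eps"
      using P(3) R[OF z] by simp
  qed
  show ?thesis unfolding Rcc_def[of va' vb' X f eps] apply (rule Least_le) using 1 2 3 by blast
qed

fun T :: "nat set \<Rightarrow> (bool list \<Rightarrow> bool) \<Rightarrow> nat \<Rightarrow> nat \<Rightarrow> bool list proto" where
  "T S f i 0 = Leaf (f [])"
| "T S f i (Suc r) = Ask (i \<in> S) (\<lambda>z. i < length z \<and> z ! i)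
     (T S (\<lambda>w. f (True # w)) (Suc i) r) (T S (\<lambda>w. f (False # w)) (Suc i) r)"

lemma run_T: "length z = i + r \<Longrightarrow> run (T S f i r) z = f (drop i z)"
proof (induction r arbitrary: f i)
  case 0 then show ?case by simp
next
  case (Suc r)
  have d: "drop i z = z ! i # drop (Suc i) z" using Suc.prems by (simp add: Cons_nth_drop_Suc)
  show ?case using Suc.IH[of "Suc i"] Suc.prems by (simp add: d)
qed

lemma view_eq: "view S z = view S z' \<Longrightarrow> i \<in> S \<Longrightarrow> (i < length z \<and> z ! i) = (i < length z' \<and> z' ! i)"
  by (drule fun_cong[of _ _ i]) (auto simp: view_def split: if_splits)

lemma valid_T: "{i..<i+r} \<subseteq> S \<union> S' \<Longrightarrow> valid (view S) (view S') (T S f i r)"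
proof (induction r arbitrary: f i)
  case 0 then show ?case by (simp only: T.simps valid.simps)
next
  case (Suc r)
  have s: "{Suc i..<Suc i+r} \<subseteq> S \<union> S'" "i \<in> S \<union> S'" using Suc.prems by (auto simp: subset_iff)
  have 1: "i \<in> S \<longrightarrow> (\<forall>z z'. view S z = view S z' \<longrightarrow> (i < length z \<and> z ! i) = (i < length z' \<and> z' ! i))"
    using view_eq[of S] by blast
  have 2: "i \<notin> S \<longrightarrow> (\<forall>z z'. view S' z = view S' z' \<longrightarrow> (i < length z \<and> z ! i) = (i < length z' \<and> z' ! i))"
    using view_eq[of S'] s(2) by blast
  show ?case unfolding T.simps valid_Ask_iff using 1 2 Suc.IH[OF s(1)] by blast
qed

lemma exists_proto:
  "\<exists>p. valid (view S) (view ({0..<N} - S)) p \<and> (\<forall>z\<in>{z. length z = N}. run p z = g z)"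
  by (rule exI[of _ "T S g 0 N"]) (auto simp: run_T valid_T)


definition rep :: "nat \<Rightarrow> bool list" where
  "rep m = concat (replicate m [True, False])"

definition blocks :: "bool list \<Rightarrow> bool list \<Rightarrow> nat \<Rightarrow> bool list" where
  "blocks a b n = concat (map (\<lambda>i. [b!i, a!i, False]) [0..<n])"

lemma length_rep[simp]: "length (rep m) = 2*m"
  unfolding rep_def by (induction m) auto

lemma rep_Suc: "rep (Suc m) = True # False # rep m"
  unfolding rep_def by simp

lemma rep_0: "rep 0 = []"
  unfolding rep_def by simp

lemma subseq_rep_False: "subseq (rep m) (False # ys) = subseq (rep m) ys"
  by (cases m) (auto simp: rep_Suc rep_0)

lemma subseq_rep_Nil: "subseq (rep m) [] = (m = 0)"
  by (cases m) (auto simp: rep_Suc rep_0)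

lemma subseq_rep_blocks:
  "subseq (rep m) (concat (map (\<lambda>i. [f i, g i, False]) xs)) = (m \<le> length (filter (\<lambda>i. f i \<or> g i) xs))"
proof (induction xs arbitrary: m)
  case Nil then show ?case by (simp add: subseq_rep_Nil)
next
  case (Cons x xs)
  show ?case
  proof (cases m)
    case 0 then show ?thesis by (simp add: rep_0)
  next
    case (Suc m')
    then show ?thesis using Cons.IH[of m] Cons.IH[of m']
      by (cases "f x"; cases "g x") (simp_all add: rep_Suc subseq_rep_False)
  qed
qed

lemma length_blocks[simp]: "length (blocks a b n) = 3*n"
  unfolding blocks_def by (induction n) auto

lemma nth_blocks_aux: "i < n \<Longrightarrow> c < 3 \<Longrightarrow> blocks a b n ! (3*i+c) = [b!i, a!i, False] ! c"
proof (induction n)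
  case 0 then show ?case by simp
next
  case (Suc n)
  have e: "blocks a b (Suc n) = blocks a b n @ [b!n, a!n, False]" unfolding blocks_def by simp
  show ?case
  proof (cases "i < n")
    case True
    then have "3*i+c < 3*n" using Suc.prems by simp
    then show ?thesis using Suc True by (simp add: e nth_append)
  next
    case False
    then have "i = n" using Suc.prems by simp
    then show ?thesis by (simp add: e nth_append)
  qed
qed

lemma nth_blocks: "j < 3*n \<Longrightarrow> blocks a b n ! j = [b!(j div 3), a!(j div 3), False] ! (j mod 3)"
  using nth_blocks_aux[of "j div 3" n "j mod 3" a b] by simp

definition red :: "nat \<Rightarrow> nat \<Rightarrow> bool list \<times> bool list \<Rightarrow> bool list" where
  "red n k ab = blocks (fst ab) (snd ab) n @ rep (2*k)"

lemma length_red[simp]: "length (red n k ab) = 3*n + 4*k"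
  unfolding red_def by simp

lemma nth_red: "j < 3*n + 4*k \<Longrightarrow> red n k ab ! j =
   (if j < 3*n then [snd ab!(j div 3), fst ab!(j div 3), False] ! (j mod 3) else rep (2*k) ! (j - 3*n))"
  unfolding red_def by (simp add: nth_append nth_blocks)

definition AA :: "nat \<Rightarrow> nat set" where
  "AA n = {j. j < 3*n \<and> j mod 3 = 1}"

lemma view_A: "fst x = fst x' \<Longrightarrow> view (AA n) (red n k x) = view (AA n) (red n k x')"
  unfolding view_def AA_def by (rule ext) (auto simp: nth_red)

lemma view_B: "snd x = snd x' \<Longrightarrow> view ({0..<3*n+4*k} - AA n) (red n k x) = view ({0..<3*n+4*k} - AA n) (red n k x')"
proof (rule ext)
  fix j assume s: "snd x = snd x'"
  show "view ({0..<3*n+4*k} - AA n) (red n k x) j = view ({0..<3*n+4*k} - AA n) (red n k x') j"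
  proof (cases "j < 3*n+4*k \<and> j \<notin> AA n")
    case True
    have "j mod 3 = 0 \<or> j mod 3 = 1 \<or> j mod 3 = 2" by auto
    then have "red n k x ! j = red n k x' ! j"
      using True s by (auto simp: nth_red AA_def)
    then show ?thesis unfolding view_def by simp
  next
    case False
    then show ?thesis unfolding view_def by auto
  qed
qed

lemma card_filter_upt: "length (filter P [0..<n]) = card {i. i < n \<and> P i}"
  unfolding length_filter_conv_card by (rule arg_cong[where f=card]) auto

lemma count_card: "count_list a True = card {i. i < length a \<and> a ! i}"
  by (simp add: count_list_eq_length_filter length_filter_conv_card eq_commute)

lemma red_correct:
  assumes "ab \<in> disj_dom n k"
  shows "red n k ab \<in> ssd_dom (3*n) (4*k) \<and> DISJ ab = SSD (3*n) (red n k ab)"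
proof -
  obtain a b where ab: "ab = (a, b)" by (cases ab)
  have la: "length a = n" and lb: "length b = n" and ca: "count_list a True = k"
    and cb: "count_list b True = k" using assms unfolding ab disj_dom_def by auto
  define SA where "SA = {i. i < n \<and> a ! i}"
  define SB where "SB = {i. i < n \<and> b ! i}"
  have cA: "card SA = k" using ca la unfolding SA_def by (simp add: count_card)
  have cB: "card SB = k" using cb lb unfolding SB_def by (simp add: count_card)
  have fin: "finite SA" "finite SB" unfolding SA_def SB_def by auto
  have UI: "card SA + card SB = card (SA \<union> SB) + card (SA \<inter> SB)" using card_Un_Int[OF fin] .
  have SU: "{i. i < n \<and> (b!i \<or> a!i)} = SA \<union> SB"
    unfolding SA_def SB_def by blast
  have "SSD (3*n) (red n k ab) = subseq (rep (2*k)) (blocks a b n)"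
    unfolding SSD_def red_def ab by simp
  also have "\<dots> = (2*k \<le> card (SA \<union> SB))"
    unfolding blocks_def subseq_rep_blocks card_filter_upt SU ..
  also have "\<dots> = (card (SA \<inter> SB) = 0)" using UI cA cB by linarith
  also have "\<dots> = (SA \<inter> SB = {})" using fin by simp
  also have "\<dots> = DISJ ab" unfolding DISJ_def ab SA_def SB_def fst_conv snd_conv la by blast
  finally show ?thesis by (simp add: ssd_dom_def)
qed

theorem mainTheorem8:
  fixes n k :: nat
  assumes "1 \<le> k" and "k \<le> n"
  shows "\<exists>A. A \<subseteq> {0..<3*n + 4*k} \<and>
    Dcc fst snd (disj_dom n k) DISJ
      \<le> Dcc (view A) (view ({0..<3*n + 4*k} - A)) (ssd_dom (3*n) (4*k)) (SSD (3*n)) \<and>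
    Rcc fst snd (disj_dom n k) DISJ (1/3)
      \<le> Rcc (view A) (view ({0..<3*n + 4*k} - A)) (ssd_dom (3*n) (4*k)) (SSD (3*n)) (1/3)"
proof (intro exI conjI)
  show "AA n \<subseteq> {0..<3*n + 4*k}" unfolding AA_def by auto
  obtain p0 where p0: "valid (view (AA n)) (view ({0..<3*n + 4*k} - AA n)) p0"
    "\<forall>z\<in>{z. length z = 3*n + 4*k}. run p0 z = SSD (3*n) z"
    using exists_proto by blast
  have R: "\<And>x. x \<in> disj_dom n k \<Longrightarrow> red n k x \<in> ssd_dom (3*n) (4*k) \<and> DISJ x = SSD (3*n) (red n k x)"
    by (rule red_correct)
  have p0': "\<forall>z\<in>ssd_dom (3*n) (4*k). run p0 z = SSD (3*n) z" using p0(2) by (simp add: ssd_dom_def)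
  show "Dcc fst snd (disj_dom n k) DISJ
      \<le> Dcc (view (AA n)) (view ({0..<3*n + 4*k} - AA n)) (ssd_dom (3*n) (4*k)) (SSD (3*n))"
    by (rule Dcc_red[OF p0(1) p0' view_A view_B R])
  show "Rcc fst snd (disj_dom n k) DISJ (1/3)
      \<le> Rcc (view (AA n)) (view ({0..<3*n + 4*k} - AA n)) (ssd_dom (3*n) (4*k)) (SSD (3*n)) (1/3)"
    by (rule Rcc_red[OF p0(1) p0' _ view_A view_B R]) simp
qed

end
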